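(* Consider the periodic one-dimensional finite-volume scheme defined in the context, with arbitrary real interface desired velocities $\mathbf{U}^n_i$, and assume that at every time step $n$ the CFL condition $\delta t<\frac12\,\frac{\delta x}{\max_i|\mathbf{U}^n_i|+\max_i|\mathbf{w}^n_i|}$ holds. If $0\le\rho^0_i\le1$ for all $i=1,\dots,N_x$, then $0\le\rho^n_i\le1$ for all $i$ and all $n\ge0$.
   Context: Grid: cells $i=1,\dots,N_x$ of width $\delta x$, indices taken modulo $N_x$ (periodic). Upwind flux: $A^{up}(u,\rho^-,\rho^+)=u\rho^-$ if $u>0$, $=u\rho^+$ if $u\le 0$. Given $\rho^n_i$ and interface velocities $\mathbf{U}^n_i$ (at interface $x_{i-1/2}$), the pressure $(p^n_i)$ is any periodic solution of $\frac{p^n_{i+1}-2p^n_i+p^n_{i-1}}{\delta x^2}=\frac1{\delta x}\big(A^{up}(\mathbf{U}^n_{i+1},\rho^n_i,\rho^n_{i+1})-A^{up}(\mathbf{U}^n_i,\rho^n_{i-1},\rho^n_i)\big)$, the correction velocity is $\mathbf{w}^n_i=-\frac{p^n_i-p^n_{i-1}}{\delta x}$, and the update is $\rho^{n+1}_i=\rho^n_i-\frac{\delta t}{\delta x}\big(A^{up}(\mathbf{U}^n_{i+1},\rho^n_i,\rho^n_{i+1})-A^{up}(\mathbf{U}^n_i,\rho^n_{i-1},\rho^n_i)\big)-\frac{\delta t}{\delta x}\big(A^{up}(\mathbf{w}^n_{i+1},\rho^n_i,\rho^n_{i+1})-A^{up}(\mathbf{w}^n_i,\rho^n_{i-1},\rho^n_i)\big)$.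 *)

theory Defs
  imports Complex_Main
begin

definition Aup :: "real \<Rightarrow> real \<Rightarrow> real \<Rightarrow> real" where
  "Aup u rm rp = (if u > 0 then u * rm else u * rp)"

definition periodic :: "nat \<Rightarrow> (int \<Rightarrow> real) \<Rightarrow> bool" where
  "periodic N f \<longleftrightarrow> (\<forall>i. f (i + int N) = f i)"

text \<open>Upwind flux difference at cell i for interface velocity field v (v i lives at x_{i-1/2}).\<close>
definition flux_diff :: "(int \<Rightarrow> real) \<Rightarrow> (int \<Rightarrow> real) \<Rightarrow> int \<Rightarrow> real" where
  "flux_diff v r i = Aup (v (i + 1)) (r i) (r (i + 1)) - Aup (v i) (r (i - 1)) (r i)"

end

theory Submission
  imports Defs
begin

lemma Aup_split: "Aup u a b = max u 0 * a + min u 0 * b"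
  by (simp add: Aup_def max_def min_def)

lemma step_nonneg:
  fixes l U0 U1 w0 w1 rm r r1 :: real
  assumes "0 \<le> l" "l * (\<bar>U0\<bar> + \<bar>U1\<bar> + \<bar>w0\<bar> + \<bar>w1\<bar>) \<le> 1"
    "0 \<le> rm" "0 \<le> r" "0 \<le> r1"
  shows "0 \<le> r - l * (Aup U1 r r1 - Aup U0 rm r) - l * (Aup w1 r r1 - Aup w0 rm r)"
proof -
  have e: "r - l * (Aup U1 r r1 - Aup U0 rm r) - l * (Aup w1 r r1 - Aup w0 rm r)
     = r * (1 - l * (max U1 0 - min U0 0 + max w1 0 - min w0 0))
       + rm * (l * (max U0 0 + max w0 0)) + r1 * (l * (- min U1 0 - min w1 0))"
    by (simp add: Aup_split algebra_simps)
  have "l * (max U1 0 - min U0 0 + max w1 0 - min w0 0) \<le> l * (\<bar>U0\<bar> + \<bar>U1\<bar> + \<bar>w0\<bar> + \<bar>w1\<bar>)"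
    by (rule mult_left_mono) (auto simp: max_def min_def assms)
  hence c: "0 \<le> 1 - l * (max U1 0 - min U0 0 + max w1 0 - min w0 0)" using assms by linarith
  have "0 \<le> r * (1 - l * (max U1 0 - min U0 0 + max w1 0 - min w0 0))"
    using assms(4) c by (rule mult_nonneg_nonneg)
  moreover have "0 \<le> rm * (l * (max U0 0 + max w0 0))"
    using assms by (intro mult_nonneg_nonneg) auto
  moreover have "0 \<le> r1 * (l * (- min U1 0 - min w1 0))"
    using assms by (intro mult_nonneg_nonneg) auto
  ultimately show ?thesis unfolding e by linarith
qed

lemma step_upper:
  fixes l U0 U1 w0 w1 rm r r1 :: real
  assumes "0 \<le> l" "l * (\<bar>U0\<bar> + \<bar>U1\<bar> + \<bar>w0\<bar> + \<bar>w1\<bar>) \<le> 1"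
    "rm \<le> 1" "r \<le> 1" "r1 \<le> 1"
    "w1 - w0 = - (Aup U1 r r1 - Aup U0 rm r)"
  shows "r - l * (Aup U1 r r1 - Aup U0 rm r) - l * (Aup w1 r r1 - Aup w0 rm r) \<le> 1"
proof -
  have "0 \<le> (1-r) - l * (Aup 0 (1-r) (1-r1) - Aup 0 (1-rm) (1-r)) - l * (Aup w1 (1-r) (1-r1) - Aup w0 (1-rm) (1-r))"
  proof (rule step_nonneg)
    have "l * (\<bar>w0\<bar> + \<bar>w1\<bar>) \<le> l * (\<bar>U0\<bar> + \<bar>U1\<bar> + \<bar>w0\<bar> + \<bar>w1\<bar>)"
      by (rule mult_left_mono) (use assms in auto)
    then show "l * (\<bar>0::real\<bar> + \<bar>0::real\<bar> + \<bar>w0\<bar> + \<bar>w1\<bar>) \<le> 1" using assms by simp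
  qed (use assms in auto)
  moreover have "1 - (r - l * (Aup U1 r r1 - Aup U0 rm r) - l * (Aup w1 r r1 - Aup w0 rm r))
    = (1-r) - l * (Aup 0 (1-r) (1-r1) - Aup 0 (1-rm) (1-r)) - l * (Aup w1 (1-r) (1-r1) - Aup w0 (1-rm) (1-r))"
  proof -
    have "Aup U1 r r1 - Aup U0 rm r = w0 - w1" using assms(6) by linarith
    have c: "Aup u (1-a) (1-b) = u - Aup u a b" for u a b :: real by (simp add: Aup_def algebra_simps)
    have z: "Aup 0 a b = 0" for a b :: real by (simp add: Aup_def)
    show ?thesis unfolding c z using arg_cong[OF \<open>Aup U1 r r1 - Aup U0 rm r = w0 - w1\<close>, of "\<lambda>x. l * x"] by (simp add: algebra_simps)
  qed
  ultimately show ?thesis by linarith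
qed

lemma per_shift_nat:
  assumes "periodic N f" shows "f (i + int N * int m) = f i"
proof (induction m arbitrary: i)
  case 0 then show ?case by simp
next
  case (Suc m)
  have "f (i + int N * int (Suc m)) = f ((i + int N * int m) + int N)" by (simp add: algebra_simps)
  also have "\<dots> = f (i + int N * int m)" using assms unfolding periodic_def by blast
  finally show ?case using Suc by simp
qed

lemma per_shift:
  assumes "periodic N f" shows "f (i + int N * k) = f i"
proof (cases "k \<ge> 0")
  case True
  then obtain m where "k = int m" using nonneg_int_cases by blast
  then show ?thesis using per_shift_nat[OF assms] by simp
next
  case False
  define m where "m = nat (- k)"
  have m: "k = - int m" using False unfolding m_def by simp
  have "f ((i + int N * k) + int N * int m) = f (i + int N * k)" by (rule per_shift_nat[OF assms])
  then show ?thesis using m by (simp add: algebra_simps)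
qed

lemma per_rep:
  assumes "periodic N f" "0 < N"
  shows "\<exists>j\<in>{1..int N}. f i = f j"
proof -
  let ?j = "(i - 1) mod int N + 1"
  have "i = ?j + int N * ((i - 1) div int N)" by (simp add: algebra_simps)
  hence "f i = f (?j + int N * ((i - 1) div int N))" by simp
  moreover have "f (?j + int N * ((i - 1) div int N)) = f ?j" by (rule per_shift[OF assms(1)])
  ultimately have "f i = f ?j" by simp
  moreover have "?j \<in> {1..int N}"
  proof -
    have N0: "0 < int N" using assms(2) by simp
    show ?thesis using pos_mod_bound[OF N0, of "i - 1"] pos_mod_sign[OF N0, of "i - 1"] by auto
  qed
  ultimately show ?thesis by blast
qed


theorem mainTheorem5:
  fixes N :: nat and dx dt :: real
    and rho U p :: "nat \<Rightarrow> int \<Rightarrow> real"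
    and w :: "nat \<Rightarrow> int \<Rightarrow> real"
  assumes N_pos: "0 < N"
    and dx_pos: "0 < dx" and dt_pos: "0 < dt"
    and rho_per: "\<And>n. periodic N (rho n)"
    and U_per: "\<And>n. periodic N (U n)"
    and p_per: "\<And>n. periodic N (p n)"
    and pressure: "\<And>n i. (p n (i + 1) - 2 * p n i + p n (i - 1)) / dx ^ 2
                      = flux_diff (U n) (rho n) i / dx"
    and w_def: "\<And>n i. w n i = - (p n i - p n (i - 1)) / dx"
    and update: "\<And>n i. rho (Suc n) i =
                   rho n i - dt / dx * flux_diff (U n) (rho n) i
                           - dt / dx * flux_diff (w n) (rho n) i"
    and CFL: "\<And>n. 2 * dt * (Max ((\<lambda>i. \<bar>U n i\<bar>) ` {1..int N})
                             + Max ((\<lambda>i. \<bar>w n i\<bar>) ` {1..int N})) < dx"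
    and init: "\<And>i. i \<in> {1..int N} \<Longrightarrow> 0 \<le> rho 0 i \<and> rho 0 i \<le> 1"
  shows "\<forall>n. \<forall>i \<in> {1..int N}. 0 \<le> rho n i \<and> rho n i \<le> 1"
proof -
  have w_per: "periodic N (w n)" for n
    using p_per[of n] unfolding periodic_def w_def by (simp add: diff_add_eq[symmetric])
  define MU where "MU n = Max ((\<lambda>i. \<bar>U n i\<bar>) ` {1..int N})" for n
  define MW where "MW n = Max ((\<lambda>i. \<bar>w n i\<bar>) ` {1..int N})" for n
  have bU: "\<bar>U n i\<bar> \<le> MU n" for n i
  proof -
    obtain j where j: "j \<in> {1..int N}" "U n i = U n j" using per_rep[OF U_per N_pos] by blast
    show ?thesis unfolding MU_def j(2) by (rule Max_ge) (use j in auto)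
  qed
  have bW: "\<bar>w n i\<bar> \<le> MW n" for n i
  proof -
    obtain j where j: "j \<in> {1..int N}" "w n i = w n j" using per_rep[OF w_per N_pos] by blast
    show ?thesis unfolding MW_def j(2) by (rule Max_ge) (use j in auto)
  qed
  have rel: "w n (i+1) - w n i = - flux_diff (U n) (rho n) i" for n i
  proof -
    have "p n (i + 1) - 2 * p n i + p n (i - 1) = dx * flux_diff (U n) (rho n) i"
    proof -
      have "p n (i + 1) - 2 * p n i + p n (i - 1) = ((p n (i + 1) - 2 * p n i + p n (i - 1)) / dx ^ 2) * dx ^ 2"
        using dx_pos by simp
      also have "\<dots> = (flux_diff (U n) (rho n) i / dx) * dx ^ 2" using pressure[of n i] by simp
      also have "\<dots> = dx * flux_diff (U n) (rho n) i" using dx_pos by (simp add: power2_eq_square)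
      finally show ?thesis .
    qed
    moreover have "w n (i+1) - w n i = - (p n (i + 1) - 2 * p n i + p n (i - 1)) / dx"
      unfolding w_def using dx_pos by (simp add: field_simps)
    ultimately show ?thesis using dx_pos by simp
  qed
  have all: "\<forall>i. 0 \<le> rho n i \<and> rho n i \<le> 1" for n
  proof (induction n)
    case 0
    show ?case
    proof
      fix i
      obtain j where j: "j \<in> {1..int N}" "rho 0 i = rho 0 j" using per_rep[OF rho_per N_pos] by blast
      show "0 \<le> rho 0 i \<and> rho 0 i \<le> 1" using init[OF j(1)] j(2) by simp
    qed
  next
    case (Suc n)
    show ?case
    proof
      fix i
      let ?l = "dt / dx"
      have l0: "0 \<le> ?l" using dt_pos dx_pos by simp
      have "?l * (\<bar>U n i\<bar> + \<bar>U n (i+1)\<bar> + \<bar>w n i\<bar> + \<bar>w n (i+1)\<bar>) \<le> ?l * (2 * (MU n + MW n))"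
        by (rule mult_left_mono) (use bU[of n i] bU[of n "i+1"] bW[of n i] bW[of n "i+1"] l0 in auto)
      also have "\<dots> \<le> 1" using CFL[of n] dx_pos dt_pos unfolding MU_def[symmetric] MW_def[symmetric]
        by (simp add: field_simps)
      finally have cfl: "?l * (\<bar>U n i\<bar> + \<bar>U n (i+1)\<bar> + \<bar>w n i\<bar> + \<bar>w n (i+1)\<bar>) \<le> 1" .
      have r: "rho (Suc n) i = rho n i - ?l * (Aup (U n (i+1)) (rho n i) (rho n (i+1)) - Aup (U n i) (rho n (i-1)) (rho n i))
                 - ?l * (Aup (w n (i+1)) (rho n i) (rho n (i+1)) - Aup (w n i) (rho n (i-1)) (rho n i))"
        using update[of n i] unfolding flux_diff_def .
      have rl: "w n (i+1) - w n i = - (Aup (U n (i+1)) (rho n i) (rho n (i+1)) - Aup (U n i) (rho n (i-1)) (rho n i))"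
        using rel[of n i] unfolding flux_diff_def .
      show "0 \<le> rho (Suc n) i \<and> rho (Suc n) i \<le> 1"
        unfolding r
        using step_nonneg[OF l0 cfl] step_upper[OF l0 cfl _ _ _ rl] Suc.IH by blast
    qed
  qed
  then show ?thesis by blast
qed

end
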